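(* Let $N,T\in\mathbb{N}^*$, $\rho>0$, $\alpha\in\mathbb{R}$. Let $W$ be an $N\times N$ random matrix with i.i.d. $\mathcal{N}(0,\rho^2/N^{2\alpha})$ entries, and $B_{T,N}$ its generalised matrix of moments of order $T$. For $l_1,l_2\in\{0,\ldots,T\}$: (i) if $l_1+l_2$ is odd then $B_{T,N}(l_1,l_2)=0$; (ii) if $l_1+l_2$ is even and $\frac{l_1+l_2}2+1\le N$, writing $s=l_1+l_2$, \[ \rho^{s}\frac{N(N-1)\cdots(N-\frac s2)}{N^{\alpha s}}\delta_{l_1,l_2}\le B_{T,N}(l_1,l_2)\le\rho^{s}N^{s(\frac12-\alpha)+1}\delta_{l_1,l_2}+\rho^{s}m_{s}\left(\frac s2\right)^{s}N^{s(\frac12-\alpha)}, \] where $\delta_{l_1,l_2}$ is the Kronecker delta.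
   Context: $m_t:=\mathbb{E}X^t$ for a standard Gaussian $X$. Generalised matrix of moments: for $i\in[N]$, $\beta_{i,0}=1$, $\beta_{i,l}=\sum_{i_1,\ldots,i_l=1}^N W_{ii_1}\cdots W_{i_{l-1}i_l}$ for $l\ge1$, and $B_{T,N}(l_1,l_2)=\mathbb{E}\sum_{i=1}^N\beta_{i,l_1}\beta_{i,l_2}$. *)

theory Defs
  imports "HOL-Probability.Probability"
begin

definition gauss_moment :: "nat \<Rightarrow> real" where
  "gauss_moment t = (\<integral>x. std_normal_density x * x ^ t \<partial>lborel)"

text \<open>beta_{i,l} for an N x N matrix w (indices 0..N-1):
  sum over i_1..i_l in [N] of W_{i i_1} W_{i_1 i_2} ... W_{i_{l-1} i_l};
  the path p : {0..<l} -> [N] encodes (i_1,...,i_l) = (p 0, ..., p (l-1)).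
  For l = 0 this is the empty sum-over-one-path of the empty product, i.e. 1.\<close>
definition beta :: "nat \<Rightarrow> (nat \<times> nat \<Rightarrow> real) \<Rightarrow> nat \<Rightarrow> nat \<Rightarrow> real" where
  "beta N w i l = (\<Sum>p\<in>({..<l} \<rightarrow>\<^sub>E {..<N}).
      \<Prod>k<l. w (if k = 0 then i else p (k - 1), p k))"

definition gen_moment_matrix ::
  "'a measure \<Rightarrow> nat \<Rightarrow> ('a \<Rightarrow> nat \<times> nat \<Rightarrow> real) \<Rightarrow> nat \<Rightarrow> nat \<Rightarrow> real" where
  "gen_moment_matrix M N W l1 l2 =
     (\<integral>\<omega>. (\<Sum>i<N. beta N (W \<omega>) i l1 * beta N (W \<omega>) i l2) \<partial>M)"

end

theory Submission
  imports Defs "HOL-Probability.Probability"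
begin

definition ed :: "nat \<Rightarrow> nat list \<Rightarrow> nat \<Rightarrow> nat \<times> nat" where
  "ed i p t = ((i#p)!t, p!t)"

definition cnt :: "nat \<Rightarrow> nat list \<Rightarrow> nat list \<Rightarrow> nat \<times> nat \<Rightarrow> nat" where
  "cnt i p q e = card {t. t < length p \<and> ed i p t = e} + card {t. t < length q \<and> ed i q t = e}"

lemma card_ed_ge1: "t < length p \<Longrightarrow> 1 \<le> card {r. r < length p \<and> ed i p r = ed i p t}"
proof -
  assume "t < length p"
  hence "t \<in> {r. r < length p \<and> ed i p r = ed i p t}" by simp
  moreover have "finite {r. r < length p \<and> ed i p r = ed i p t}" by simp
  ultimately show ?thesis by (metis One_nat_def Suc_leI card_gt_0_iff empty_iff)
qed

lemma walk_distinct: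
  assumes notin: "i \<notin> snd ` D" and inj: "inj_on snd D"
    and sub: "\<And>t. t < length p \<Longrightarrow> ed i p t \<in> D"
  shows "a < b \<Longrightarrow> b \<le> length p \<Longrightarrow> (i#p)!a \<noteq> (i#p)!b"
proof (induction a arbitrary: b)
  case 0
  then obtain b' where b: "b = Suc b'" "b' < length p" by (cases b) auto
  have "snd (ed i p b') = p!b'" by (simp add: ed_def)
  with sub[OF b(2)] notin have "i \<noteq> p!b'" by force
  then show ?case using b by simp
next
  case (Suc a)
  then obtain b' where b: "b = Suc b'" "b' < length p" "a < b'" by (cases b) auto
  have "ed i p a \<in> D" "ed i p b' \<in> D" using sub b Suc.prems by auto
  show ?case
  proof
    assume "(i#p)!Suc a = (i#p)!b"
    hence "snd (ed i p a) = snd (ed i p b')" using b by (simp add: ed_def)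
    hence "ed i p a = ed i p b'" using inj \<open>ed i p a \<in> D\<close> \<open>ed i p b' \<in> D\<close> by (meson inj_onD)
    hence "(i#p)!a = (i#p)!b'" by (simp add: ed_def)
    with Suc.IH[of b'] b show False by simp
  qed
qed

lemma walk_distinct':
  assumes "i \<notin> snd ` D" "inj_on snd D" "\<And>t. t < length p \<Longrightarrow> ed i p t \<in> D"
  shows "distinct (i#p)"
proof -
  have "\<forall>a<length (i#p). \<forall>b<length (i#p). a \<noteq> b \<longrightarrow> (i#p)!a \<noteq> (i#p)!b"
  proof (intro allI impI)
    fix a b assume "a < length (i#p)" "b < length (i#p)" "a \<noteq> b"
    then show "(i#p)!a \<noteq> (i#p)!b"
      using walk_distinct[OF assms, of a b] walk_distinct[OF assms, of b a]
      by (cases "a < b") (auto simp del: nth_Cons_Suc)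
  qed
  then show ?thesis using distinct_conv_nth by blast
qed

lemma ed_inj:
  assumes "distinct (i#p)" "a < length p" "b < length p" "ed i p a = ed i p b"
  shows "a = b"
proof -
  have "(i#p)!a = (i#p)!b" using assms(4) by (simp add: ed_def)
  with assms(1-3) show ?thesis by (simp add: nth_eq_iff_index_eq del: nth_Cons_Suc)
qed

lemma card_ed_le1:
  assumes "distinct (i#p)"
  shows "card {r. r < length p \<and> ed i p r = e} \<le> 1"
  using ed_inj[OF assms] by (simp only: One_nat_def, subst card_le_Suc0_iff_eq) auto

lemma follow:
  assumes dq: "distinct (i#q)" and cr: "\<And>t. t < length p \<Longrightarrow> \<exists>r<length q. ed i q r = ed i p t"
  shows "t < length p \<Longrightarrow> t < length q \<and> p!t = q!t"
proof (induction t rule: less_induct)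
  case (less t)
  obtain r where r: "r < length q" "ed i q r = ed i p t" using cr[OF less.prems] by blast
  have prev: "(i#p)!t = (i#q)!t \<and> t \<le> length q"
  proof (cases t)
    case 0 then show ?thesis by simp
  next
    case (Suc t') then show ?thesis using less.IH[of t'] less.prems by simp
  qed
  have "(i#q)!r = (i#p)!t" using r(2) by (simp add: ed_def)
  with prev have "(i#q)!r = (i#q)!t" by simp
  with dq r(1) prev have rt: "r = t" by (simp add: nth_eq_iff_index_eq del: nth_Cons_Suc)
  from r(2) have "q!r = p!t" by (simp add: ed_def)
  with rt r(1) show ?case by simp
qed

lemma cross:
  assumes ev: "\<And>e. even (cnt i p q e)" and dp: "distinct (i#p)" and dq: "distinct (i#q)"
    and t: "t < length p"
  shows "\<exists>r<length q. ed i q r = ed i p t"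
proof -
  let ?e = "ed i p t"
  have c1: "card {r. r < length p \<and> ed i p r = ?e} = 1"
    using card_ed_ge1[OF t, of i] card_ed_le1[OF dp, of ?e] by simp
  have c2: "card {r. r < length q \<and> ed i q r = ?e} \<le> 1" using card_ed_le1[OF dq] .
  from ev[of ?e] c1 have "odd (card {r. r < length q \<and> ed i q r = ?e})" by (simp add: cnt_def)
  hence "card {r. r < length q \<and> ed i q r = ?e} \<noteq> 0" by presburger
  hence "{r. r < length q \<and> ed i q r = ?e} \<noteq> {}" by (metis card.empty)
  thus ?thesis by blast
qed

lemma sum_card_ed:
  assumes "finite D" "\<And>t. t < length p \<Longrightarrow> ed i p t \<in> D"
  shows "(\<Sum>e\<in>D. card {t. t < length p \<and> ed i p t = e}) = length p"
proof -
  have "(\<Sum>e\<in>D. \<Sum>x\<in>{x \<in> {..<length p}. ed i p x = e}. (1::nat)) = (\<Sum>x\<in>{..<length p}. 1)"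
    using assms by (intro sum.group) auto
  moreover have "\<And>e. {x \<in> {..<length p}. ed i p x = e} = {t. t < length p \<and> ed i p t = e}" by auto
  ultimately show ?thesis by simp
qed

lemma tree_case:
  assumes ev: "\<And>e. even (cnt i p q e)"
    and big: "card (set (i#p@q)) \<ge> (length p + length q) div 2 + 1"
  shows "p = q \<and> distinct (i#p)"
proof -
  define D where "D = ed i p ` {..<length p} \<union> ed i q ` {..<length q}"
  have fD: "finite D" unfolding D_def by simp
  have subp: "\<And>t. t < length p \<Longrightarrow> ed i p t \<in> D" and subq: "\<And>t. t < length q \<Longrightarrow> ed i q t \<in> D"
    unfolding D_def by auto
  have sumD: "(\<Sum>e\<in>D. cnt i p q e) = length p + length q"
    unfolding cnt_def sum.distrib using sum_card_ed[OF fD subp] sum_card_ed[OF fD subq] by simp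
  have ge2: "2 \<le> cnt i p q e" if "e \<in> D" for e
  proof -
    have "1 \<le> cnt i p q e"
      using that card_ed_ge1[of _ p i] card_ed_ge1[of _ q i] unfolding D_def cnt_def by fastforce
    with ev[of e] show ?thesis by presburger
  qed
  have "(\<Sum>e\<in>D. 2) \<le> (\<Sum>e\<in>D. cnt i p q e)" using ge2 by (intro sum_mono) auto
  hence cD: "2 * card D \<le> length p + length q" using sumD by simp
  have setEq: "set (i#p@q) = insert i (snd ` D)"
  proof -
    have "snd ` (ed i p ` {..<length p}) = set p"
      by (auto simp: ed_def image_iff in_set_conv_nth)
    moreover have "snd ` (ed i q ` {..<length q}) = set q"
      by (auto simp: ed_def image_iff in_set_conv_nth)
    ultimately show ?thesis unfolding D_def image_Un by auto
  qed
  have cs: "card (snd ` D) \<le> card D" using fD card_image_le by blast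
  have notin: "i \<notin> snd ` D"
  proof
    assume "i \<in> snd ` D"
    hence "set (i#p@q) = snd ` D" using setEq by auto
    with big cs cD show False by simp
  qed
  have "card (set (i#p@q)) = Suc (card (snd ` D))" using setEq notin fD by simp
  with big cs cD have "card (snd ` D) = card D" by simp
  hence inj: "inj_on snd D" using fD eq_card_imp_inj_on by blast
  have dp: "distinct (i#p)" using walk_distinct'[OF notin inj subp] .
  have dq: "distinct (i#q)" using walk_distinct'[OF notin inj subq] .
  have ev': "\<And>e. even (cnt i q p e)" using ev by (simp add: cnt_def add.commute)
  have A: "\<And>t. t < length p \<Longrightarrow> t < length q \<and> p!t = q!t"
    using follow[OF dq cross[OF ev dp dq]] by blast
  have B: "\<And>t. t < length q \<Longrightarrow> t < length p \<and> q!t = p!t"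
    using follow[OF dp cross[OF ev' dq dp]] by blast
  have "length p = length q"
    using A[of "length q"] B[of "length p"] by (meson less_irrefl linorder_neqE_nat)
  hence "p = q" using A by (simp add: nth_equalityI)
  with dp show ?thesis by simp
qed



definition SL :: "nat \<Rightarrow> nat \<Rightarrow> nat set \<Rightarrow> nat \<Rightarrow> nat list set" where
  "SL N k A m = {xs. length xs = m \<and> set xs \<subseteq> {..<N} \<and> card (A \<union> set xs) \<le> k}"

lemma finite_SL: "finite (SL N k A m)"
  by (rule finite_subset[OF _ finite_lists_length_eq[of "{..<N}" m]]) (auto simp: SL_def)

lemma SL_Suc: "SL N k A (Suc m) \<subseteq> (\<Union>x\<in>{..<N}. (Cons x) ` SL N k (insert x A) m)"
  by (auto simp: SL_def length_Suc_conv image_iff)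

lemma count_lists:
  assumes "finite A" "A \<subseteq> {..<N}" "card A \<le> k" "N \<ge> 1"
  shows "real (card (SL N k A m)) \<le> real k ^ m * real N ^ (k - card A)"
  using assms(1-3)
proof (induction m arbitrary: A)
  case 0
  have "SL N k A 0 \<subseteq> {[]}" by (auto simp: SL_def)
  hence "card (SL N k A 0) \<le> card {[]::nat list}" by (intro card_mono) auto
  hence c: "real (card (SL N k A 0)) \<le> 1" by simp
  have "1 \<le> real N ^ (k - card A)" using assms(4) by simp
  with c show ?case by (simp only: power_0 mult_1_left)
next
  case (Suc m)
  define a where "a = card A"
  define f where "f x = real (card (SL N k (insert x A) m))" for x
  have "card (SL N k A (Suc m)) \<le> card (\<Union>x\<in>{..<N}. (Cons x) ` SL N k (insert x A) m)"
    by (rule card_mono[OF _ SL_Suc]) (auto intro: finite_SL)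
  also have "\<dots> \<le> (\<Sum>x<N. card ((Cons x) ` SL N k (insert x A) m))" by (rule card_UN_le) simp
  also have "\<dots> \<le> (\<Sum>x<N. card (SL N k (insert x A) m))" by (intro sum_mono card_image_le finite_SL)
  finally have 1: "real (card (SL N k A (Suc m))) \<le> (\<Sum>x<N. f x)"
    unfolding f_def of_nat_sum[symmetric] of_nat_le_iff .
  have 2: "(\<Sum>x<N. f x) = (\<Sum>x\<in>{..<N} - A. f x) + (\<Sum>x\<in>A. f x)"
    using Suc.prems by (intro sum.subset_diff) auto
  have fA: "f x \<le> real k ^ m * real N ^ (k - a)" if "x \<in> A" for x
    using Suc.IH[of A] Suc.prems that unfolding f_def a_def by (simp add: insert_absorb)
  have sA: "(\<Sum>x\<in>A. f x) \<le> real a * (real k ^ m * real N ^ (k - a))"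
    using sum_mono[OF fA] unfolding a_def by simp
  show ?case
  proof (cases "a < k")
    case True
    have fB: "f x \<le> real k ^ m * real N ^ (k - Suc a)" if "x \<in> {..<N} - A" for x
      using Suc.IH[of "insert x A"] Suc.prems that True unfolding f_def a_def by auto
    have "(\<Sum>x\<in>{..<N} - A. f x) \<le> real (card ({..<N} - A)) * (real k ^ m * real N ^ (k - Suc a))"
      using sum_mono[of "{..<N} - A" f "\<lambda>_. real k ^ m * real N ^ (k - Suc a)", OF fB] by simp
    also have "\<dots> \<le> real N * (real k ^ m * real N ^ (k - Suc a))"
      by (intro mult_right_mono) (auto simp: card_Diff_subset Suc.prems)
    also have "\<dots> = real k ^ m * real N ^ (k - a)"
      using True by (simp add: power_Suc[symmetric] Suc_diff_Suc del: power_Suc)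
    finally have sB: "(\<Sum>x\<in>{..<N} - A. f x) \<le> real k ^ m * real N ^ (k - a)" .
    have "real (card (SL N k A (Suc m))) \<le> real (Suc a) * (real k ^ m * real N ^ (k - a))"
      using 1 2 sA sB by (simp add: algebra_simps)
    also have "\<dots> \<le> real k * (real k ^ m * real N ^ (k - a))"
      using True by (intro mult_right_mono) auto
    finally show ?thesis unfolding a_def by simp
  next
    case False
    have fB: "f x = 0" if "x \<in> {..<N} - A" for x
    proof -
      have "SL N k (insert x A) m = {}"
      proof (rule ccontr)
        assume "SL N k (insert x A) m \<noteq> {}"
        then obtain xs where "card (insert x A \<union> set xs) \<le> k" by (auto simp: SL_def)
        moreover have "card (insert x A) \<le> card (insert x A \<union> set xs)" by (intro card_mono) (auto simp: Suc.prems)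
        moreover have "card (insert x A) = Suc a" using that Suc.prems unfolding a_def by simp
        ultimately show False using False by simp
      qed
      then show ?thesis unfolding f_def by simp
    qed
    have "a = k" using False Suc.prems unfolding a_def by simp
    then show ?thesis using 1 2 sA fB unfolding a_def by simp
  qed
qed



definition mm :: "nat \<Rightarrow> real" where
  "mm n = (if even n then fact n / (2 ^ (n div 2) * fact (n div 2)) else 0)"

lemma mm_nonneg: "0 \<le> mm n" by (simp add: mm_def)
lemma mm_pos_even: "even n \<Longrightarrow> 0 < mm n" by (simp add: mm_def)
lemma mm_odd: "odd n \<Longrightarrow> mm n = 0" by (simp add: mm_def)
lemma mm_0: "mm 0 = 1" by (simp add: mm_def)
lemma mm_2: "mm 2 = 1" by (simp add: mm_def)

lemma mm_SS: "mm (Suc (Suc n)) = real (Suc n) * mm n"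
proof (cases "even n")
  case True
  then obtain k where k: "n = 2 * k" by blast
  have "Suc (Suc n) = 2 * Suc k" using k by simp
  hence "mm (Suc (Suc n)) = fact (2 * Suc k) / (2 ^ Suc k * fact (Suc k))" by (simp add: mm_def)
  also have "fact (2 * Suc k) = (2 * real (Suc k) * real (2*k+1)) * (fact (2*k) :: real)"
    by (simp add: fact_Suc algebra_simps)
  also have "fact (Suc k) = real (Suc k) * (fact k :: real)" by (simp add: fact_Suc)
  also have "(2 * real (Suc k) * real (2*k+1)) * (fact (2*k) :: real) / (2 ^ Suc k * (real (Suc k) * fact k))
     = real (2*k+1) * (fact (2*k) / (2 ^ k * fact k))"
    by (simp del: of_nat_Suc of_nat_add)
  finally show ?thesis using k by (simp add: mm_def)
next
  case False then show ?thesis by (simp add: mm_def)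
qed

lemma mm_mult_even: "mm a * mm (2 * y) \<le> mm (a + 2 * y)"
proof (induction y)
  case 0 then show ?case by (simp add: mm_0)
next
  case (Suc y)
  have "mm a * mm (2 * Suc y) = real (Suc (2*y)) * (mm a * mm (2*y))"
    using mm_SS[of "2*y"] by (simp add: ac_simps)
  also have "\<dots> \<le> real (Suc (2*y)) * mm (a + 2*y)" by (intro mult_left_mono Suc.IH) auto
  also have "\<dots> \<le> real (Suc (a + 2*y)) * mm (a + 2*y)" by (intro mult_right_mono mm_nonneg) auto
  also have "\<dots> = mm (a + 2 * Suc y)" using mm_SS[of "a + 2*y"] by simp
  finally show ?case .
qed

lemma mm_mult: "mm a * mm b \<le> mm (a + b)"
proof (cases "even b")
  case True then obtain y where "b = 2*y" by blast
  then show ?thesis using mm_mult_even by simp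
next
  case False then show ?thesis by (simp add: mm_odd mm_nonneg)
qed

lemma mm_prod: "finite S \<Longrightarrow> (\<Prod>e\<in>S. mm (c e)) \<le> mm (\<Sum>e\<in>S. c e)"
proof (induction S rule: finite_induct)
  case empty then show ?case by (simp add: mm_0)
next
  case (insert x F)
  have "(\<Prod>e\<in>insert x F. mm (c e)) = mm (c x) * (\<Prod>e\<in>F. mm (c e))" using insert by simp
  also have "\<dots> \<le> mm (c x) * mm (\<Sum>e\<in>F. c e)" by (intro mult_left_mono insert.IH mm_nonneg)
  also have "\<dots> \<le> mm (c x + (\<Sum>e\<in>F. c e))" by (rule mm_mult)
  finally show ?case using insert by simp
qed

lemma gauss_mm: "(\<integral>x. std_normal_density x * x ^ t \<partial>lborel) = mm t"
proof (cases "even t")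
  case True then obtain k where k: "t = 2*k" by blast
  then show ?thesis using integral_std_normal_moment_even[of k] by (simp add: mm_def)
next
  case False then obtain k where k: "t = 2*k+1" using oddE by blast
  then show ?thesis using integral_std_normal_moment_odd[of k] by (simp add: mm_def)
qed

lemma normal_mm:
  assumes "0 < \<sigma>"
  shows "(\<integral>x. normal_density 0 \<sigma> x * x ^ t \<partial>lborel) = \<sigma> ^ t * mm t"
proof (cases "even t")
  case True then obtain k where k: "t = 2*k" by blast
  have "(\<integral>x. normal_density 0 \<sigma> x * x ^ t \<partial>lborel) = fact (2 * k) / ((2 / \<sigma>\<^sup>2)^k * fact k)"
    using integral_normal_moment_even[OF assms, of 0 k] k by simp
  also have "\<dots> = \<sigma> ^ t * mm t" using k assms
    by (simp add: mm_def field_simps power_divide flip: power_mult)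
  finally show ?thesis .
next
  case False then obtain k where k: "t = 2*k+1" using oddE by blast
  then show ?thesis using integral_normal_moment_odd[OF assms, of 0 k] by (simp add: mm_def)
qed



definition Ls :: "nat \<Rightarrow> nat \<Rightarrow> nat list set" where
  "Ls N l = {xs. set xs \<subseteq> {..<N} \<and> length xs = l}"
definition Om :: "nat \<Rightarrow> nat \<Rightarrow> nat \<Rightarrow> (nat \<times> nat list \<times> nat list) set" where
  "Om N l1 l2 = {..<N} \<times> (Ls N l1 \<times> Ls N l2)"
definition wt :: "nat \<Rightarrow> nat \<Rightarrow> nat list \<Rightarrow> nat list \<Rightarrow> real" where
  "wt N i p q = (\<Prod>e\<in>{..<N}\<times>{..<N}. mm (cnt i p q e))"

lemma finite_Ls: "finite (Ls N l)" unfolding Ls_def by (rule finite_lists_length_eq) simp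
lemma finite_Om: "finite (Om N l1 l2)" unfolding Om_def by (simp add: finite_Ls)

lemma ed_in: "i < N \<Longrightarrow> set p \<subseteq> {..<N} \<Longrightarrow> t < length p \<Longrightarrow> ed i p t \<in> {..<N}\<times>{..<N}"
  unfolding ed_def using nth_mem[of t p] nth_mem[of t "i#p"] by (auto simp del: nth_mem)

lemma sum_cnt:
  assumes "i < N" "set p \<subseteq> {..<N}" "set q \<subseteq> {..<N}"
  shows "(\<Sum>e\<in>{..<N}\<times>{..<N}. cnt i p q e) = length p + length q"
  unfolding cnt_def sum.distrib
  using sum_card_ed[of "{..<N}\<times>{..<N}" p i] sum_card_ed[of "{..<N}\<times>{..<N}" q i] ed_in assms by auto

lemma wt_nonneg: "0 \<le> wt N i p q" unfolding wt_def by (intro prod_nonneg mm_nonneg)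

lemma wt_le:
  assumes "i < N" "set p \<subseteq> {..<N}" "set q \<subseteq> {..<N}"
  shows "wt N i p q \<le> mm (length p + length q)"
  unfolding wt_def using mm_prod[of "{..<N}\<times>{..<N}" "cnt i p q"] sum_cnt[OF assms] by simp

lemma wt_odd:
  assumes "i < N" "set p \<subseteq> {..<N}" "set q \<subseteq> {..<N}" "odd (length p + length q)"
  shows "wt N i p q = 0"
proof -
  have "\<exists>e\<in>{..<N}\<times>{..<N}. odd (cnt i p q e)"
  proof (rule ccontr)
    assume "\<not> ?thesis"
    hence "even (\<Sum>e\<in>{..<N}\<times>{..<N}. cnt i p q e)" by (intro dvd_sum) auto
    with sum_cnt[OF assms(1-3)] assms(4) show False by simp
  qed
  then obtain e where e: "e \<in> {..<N}\<times>{..<N}" "odd (cnt i p q e)" by blast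
  have "mm (cnt i p q e) = 0" using e(2) by (rule mm_odd)
  then show ?thesis unfolding wt_def using e(1) by (intro prod_zero) blast+
qed

lemma wt_even:
  assumes "i < N" "set p \<subseteq> {..<N}" "set q \<subseteq> {..<N}" "wt N i p q \<noteq> 0"
  shows "even (cnt i p q e)"
proof (cases "e \<in> {..<N}\<times>{..<N}")
  case True
  then show ?thesis using assms(4) unfolding wt_def by (metis mm_odd prod_zero_iff finite_SigmaI finite_lessThan)
next
  case False
  have "\<And>t. t < length p \<Longrightarrow> ed i p t \<noteq> e" "\<And>t. t < length q \<Longrightarrow> ed i q t \<noteq> e"
    using ed_in[OF assms(1)] assms(2,3) False by blast+
  hence "cnt i p q e = 0" unfolding cnt_def by auto
  then show ?thesis by simp
qed

lemma wt_good:
  assumes "distinct (i#p)"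
  shows "wt N i p p = 1"
proof -
  have "mm (cnt i p p e) = 1" for e
  proof -
    define c where "c = card {t. t < length p \<and> ed i p t = e}"
    have "c \<le> 1" unfolding c_def by (rule card_ed_le1[OF assms])
    then have "c = 0 \<or> c = 1" by auto
    moreover have "cnt i p p e = c + c" unfolding cnt_def c_def by simp
    moreover have "c = 1 \<Longrightarrow> cnt i p p e = 2" using \<open>cnt i p p e = c + c\<close> by simp
    ultimately show ?thesis using mm_0 mm_2 by (metis add_0)
  qed
  then show ?thesis unfolding wt_def by simp
qed



definition GG :: "nat \<Rightarrow> nat \<Rightarrow> nat \<Rightarrow> (nat \<times> nat list \<times> nat list) set" where
  "GG N l1 l2 = {x \<in> Om N l1 l2. case x of (i,p,q) \<Rightarrow> p = q \<and> distinct (i#p)}"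
definition Bad :: "nat \<Rightarrow> nat \<Rightarrow> nat \<Rightarrow> (nat \<times> nat list \<times> nat list) set" where
  "Bad N l1 l2 = {x \<in> Om N l1 l2. case x of (i,p,q) \<Rightarrow> card (set (i#p@q)) \<le> (l1 + l2) div 2}"

lemma prod_shift: "l \<le> N \<Longrightarrow> real (\<Prod>{N - l..N}) = (\<Prod>k\<in>{0..l}. real N - real k)"
proof -
  assume l: "l \<le> N"
  have "(\<Prod>{N - l..N}) = (\<Prod>k\<in>{0..l}. N - k)"
    by (rule prod.reindex_bij_witness[where i = "\<lambda>k. N - k" and j = "\<lambda>k. N - k"]) (use l in auto)
  hence "real (\<Prod>{N - l..N}) = (\<Prod>k\<in>{0..l}. real (N - k))" by (simp add: of_nat_prod)
  also have "\<dots> = (\<Prod>k\<in>{0..l}. real N - real k)" using l by (intro prod.cong) (auto simp: of_nat_diff)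
  finally show ?thesis .
qed

lemma card_GG:
  assumes "Suc l \<le> N"
  shows "real (card (GG N l l)) = (\<Prod>k\<in>{0..l}. real N - real k)"
proof -
  define DL where "DL = {ys. length ys = Suc l \<and> distinct ys \<and> set ys \<subseteq> {..<N}}"
  have eq: "GG N l l = (\<lambda>ys. (hd ys, tl ys, tl ys)) ` DL"
  proof
    show "GG N l l \<subseteq> (\<lambda>ys. (hd ys, tl ys, tl ys)) ` DL"
    proof
      fix x assume "x \<in> GG N l l"
      then obtain i p where x: "x = (i,p,p)" "i < N" "p \<in> Ls N l" "distinct (i#p)"
        by (auto simp: GG_def Om_def)
      then have "i#p \<in> DL" by (auto simp: DL_def Ls_def)
      then show "x \<in> (\<lambda>ys. (hd ys, tl ys, tl ys)) ` DL" using x by force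
    qed
  next
    show "(\<lambda>ys. (hd ys, tl ys, tl ys)) ` DL \<subseteq> GG N l l"
    proof
      fix x assume "x \<in> (\<lambda>ys. (hd ys, tl ys, tl ys)) ` DL"
      then obtain ys where ys: "ys \<in> DL" "x = (hd ys, tl ys, tl ys)" by blast
      then obtain i p where "ys = i#p" by (cases ys) (auto simp: DL_def)
      with ys show "x \<in> GG N l l" by (auto simp: DL_def GG_def Om_def Ls_def)
    qed
  qed
  have inj: "inj_on (\<lambda>ys. (hd ys, tl ys, tl ys)) DL"
  proof (rule inj_onI)
    fix a b assume "a \<in> DL" "b \<in> DL" "(hd a, tl a, tl a) = (hd b, tl b, tl b)"
    then show "a = b" by (cases a; cases b) (auto simp: DL_def)
  qed
  have "card DL = \<Prod>{card {..<N} - Suc l + 1..card {..<N}}"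
    unfolding DL_def using assms by (intro card_lists_distinct_length_eq) auto
  moreover have "Suc (N - Suc l) = N - l" using assms by simp
  ultimately have "card DL = \<Prod>{N - l..N}" by simp
  hence "card (GG N l l) = \<Prod>{N - l..N}" using eq inj card_image by metis
  then show ?thesis using prod_shift[of l N] assms by simp
qed

lemma card_GG_le:
  assumes "Suc l \<le> N"
  shows "real (card (GG N l l)) \<le> real N ^ Suc l"
proof -
  have "(\<Prod>k\<in>{0..l}. real N - real k) \<le> (\<Prod>k\<in>{0..l}. real N)"
    using assms by (intro prod_mono) auto
  then show ?thesis using card_GG[OF assms] by simp
qed

lemma GG_empty: "l1 \<noteq> l2 \<Longrightarrow> GG N l1 l2 = {}"
  by (auto simp: GG_def Om_def Ls_def)

lemma card_Bad:
  assumes "N \<ge> 1"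
  shows "real (card (Bad N l1 l2)) \<le> real ((l1+l2) div 2) ^ (l1+l2) * real N ^ ((l1+l2) div 2)"
proof (cases "(l1+l2) div 2 = 0")
  case True
  have "Bad N l1 l2 = {}"
  proof -
    have "card (set (i#p@q)) \<noteq> 0" for i :: nat and p q by simp
    then show ?thesis using True by (auto simp: Bad_def)
  qed
  then show ?thesis by simp
next
  case False
  define k where "k = (l1+l2) div 2"
  define s where "s = l1 + l2"
  define Sg where "Sg = (SIGMA i:{..<N}. SL N k {i} s)"
  have sub: "Bad N l1 l2 \<subseteq> (\<lambda>(i,ys). (i, take l1 ys, drop l1 ys)) ` Sg"
  proof
    fix x assume "x \<in> Bad N l1 l2"
    then obtain i p q where x: "x = (i,p,q)" "i < N" "p \<in> Ls N l1" "q \<in> Ls N l2"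
      "card (set (i#p@q)) \<le> k" by (auto simp: Bad_def Om_def k_def)
    have "(i, p@q) \<in> Sg" using x by (auto simp: Sg_def SL_def Ls_def s_def)
    moreover have "x = (\<lambda>(i,ys). (i, take l1 ys, drop l1 ys)) (i, p@q)" using x by (auto simp: Ls_def)
    ultimately show "x \<in> (\<lambda>(i,ys). (i, take l1 ys, drop l1 ys)) ` Sg" by blast
  qed
  have fSg: "finite Sg" unfolding Sg_def by (intro finite_SigmaI finite_SL) auto
  have "card (Bad N l1 l2) \<le> card Sg"
    using card_mono[OF finite_imageI[OF fSg] sub] card_image_le[OF fSg, of "\<lambda>(i,ys). (i, take l1 ys, drop l1 ys)"]
    by (rule le_trans)
  also have "card Sg = (\<Sum>i<N. card (SL N k {i} s))" unfolding Sg_def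
    by (rule card_SigmaI) (auto intro: finite_SL)
  finally have "real (card (Bad N l1 l2)) \<le> (\<Sum>i<N. real (card (SL N k {i} s)))"
    by (metis of_nat_le_iff of_nat_sum)
  also have "\<dots> \<le> (\<Sum>i<N. real k ^ s * real N ^ (k - 1))"
    using False count_lists[of "{i}" N k s for i] assms by (intro sum_mono) (auto simp: k_def)
  also have "\<dots> = real k ^ s * (real N * real N ^ (k - 1))" by simp
  also have "real N * real N ^ (k - 1) = real N ^ k" using False
    by (simp add: k_def power_Suc[symmetric] del: power_Suc)
  finally show ?thesis unfolding k_def s_def by simp
qed



lemma Om_mem: "(i,p,q) \<in> Om N l1 l2 \<Longrightarrow> i < N \<and> set p \<subseteq> {..<N} \<and> set q \<subseteq> {..<N} \<and> length p = l1 \<and> length q = l2"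
  by (auto simp: Om_def Ls_def)

lemma sum_wt_odd: "odd (l1+l2) \<Longrightarrow> (\<Sum>(i,p,q)\<in>Om N l1 l2. wt N i p q) = 0"
  by (intro sum.neutral) (auto dest!: Om_mem intro!: wt_odd)

lemma sum_wt_nonneg: "0 \<le> (\<Sum>(i,p,q)\<in>Om N l1 l2. wt N i p q)"
  by (intro sum_nonneg) (auto simp: wt_nonneg)

lemma sum_wt_lower:
  assumes "Suc l \<le> N"
  shows "(\<Prod>k\<in>{0..l}. real N - real k) \<le> (\<Sum>(i,p,q)\<in>Om N l l. wt N i p q)"
proof -
  have "(\<Sum>(i,p,q)\<in>GG N l l. wt N i p q) = (\<Sum>x\<in>GG N l l. 1)"
    by (intro sum.cong) (auto simp: GG_def wt_good)
  hence "(\<Sum>(i,p,q)\<in>GG N l l. wt N i p q) = real (card (GG N l l))" by simp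
  moreover have "(\<Sum>(i,p,q)\<in>GG N l l. wt N i p q) \<le> (\<Sum>(i,p,q)\<in>Om N l l. wt N i p q)"
    by (intro sum_mono2 finite_Om) (auto simp: GG_def wt_nonneg)
  ultimately show ?thesis using card_GG[OF assms] by simp
qed

lemma sum_wt_upper:
  "(\<Sum>(i,p,q)\<in>Om N l1 l2. wt N i p q) \<le> real (card (GG N l1 l2)) + mm (l1+l2) * real (card (Bad N l1 l2))"
proof -
  let ?f = "\<lambda>(i,p,q). wt N i p q"
  let ?g = "\<lambda>x. if x \<in> Bad N l1 l2 then mm (l1+l2) else 0"
  have GO: "GG N l1 l2 \<subseteq> Om N l1 l2" by (auto simp: GG_def)
  have BO: "Bad N l1 l2 \<subseteq> Om N l1 l2" by (auto simp: Bad_def)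
  have "sum ?f (Om N l1 l2) = sum ?f (Om N l1 l2 - GG N l1 l2) + sum ?f (GG N l1 l2)"
    by (intro sum.subset_diff GO finite_Om)
  moreover have "sum ?f (GG N l1 l2) = real (card (GG N l1 l2))"
  proof -
    have "sum ?f (GG N l1 l2) = (\<Sum>x\<in>GG N l1 l2. 1)"
      by (intro sum.cong) (auto simp: GG_def wt_good)
    then show ?thesis by simp
  qed
  moreover have "sum ?f (Om N l1 l2 - GG N l1 l2) \<le> sum ?g (Om N l1 l2 - GG N l1 l2)"
  proof (intro sum_mono)
    fix x assume x: "x \<in> Om N l1 l2 - GG N l1 l2"
    then obtain i p q where xx: "x = (i,p,q)" by (cases x) auto
    have m: "i < N" "set p \<subseteq> {..<N}" "set q \<subseteq> {..<N}" "length p = l1" "length q = l2"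
      using Om_mem[of i p q N l1 l2] x xx by auto
    show "?f x \<le> ?g x"
    proof (cases "wt N i p q = 0")
      case True then show ?thesis using xx by (simp add: mm_nonneg)
    next
      case False
      have ev: "\<And>e. even (cnt i p q e)" using wt_even[OF m(1-3) False] .
      have "card (set (i#p@q)) \<le> (l1+l2) div 2"
      proof (rule ccontr)
        assume "\<not> ?thesis"
        hence "card (set (i#p@q)) \<ge> (length p + length q) div 2 + 1" using m by simp
        from tree_case[OF ev this] have "p = q \<and> distinct (i#p)" .
        with x xx show False by (auto simp: GG_def)
      qed
      hence "x \<in> Bad N l1 l2" using x xx by (auto simp: Bad_def)
      then show ?thesis using xx wt_le[OF m(1-3)] m by simp
    qed
  qed
  moreover have "sum ?g (Om N l1 l2 - GG N l1 l2) \<le> sum ?g (Om N l1 l2)"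
    by (intro sum_mono2 finite_Om) (auto simp: mm_nonneg)
  moreover have "sum ?g (Om N l1 l2) = mm (l1+l2) * real (card (Bad N l1 l2))"
  proof -
    have "sum ?g (Om N l1 l2) = sum (\<lambda>_. mm (l1+l2)) (Om N l1 l2 \<inter> Bad N l1 l2)"
      by (rule sum.inter_restrict[symmetric]) (rule finite_Om)
    also have "Om N l1 l2 \<inter> Bad N l1 l2 = Bad N l1 l2" using BO by blast
    finally show ?thesis by simp
  qed
  ultimately show ?thesis by linarith
qed



lemma beta_list: "beta N w i l = (\<Sum>p\<in>Ls N l. \<Prod>t<l. w (ed i p t))"
proof -
  define h where "h p = (\<lambda>t. if t < l then p!t else undefined)" for p :: "nat list"
  have bij: "bij_betw h (Ls N l) ({..<l} \<rightarrow>\<^sub>E {..<N})"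
  proof (rule bij_betw_imageI)
    show "inj_on h (Ls N l)"
    proof (rule inj_onI)
      fix p q assume pq: "p \<in> Ls N l" "q \<in> Ls N l" "h p = h q"
      have "p!t = q!t" if "t < l" for t
      proof -
        have "h p t = h q t" using pq(3) by simp
        then show ?thesis using that by (simp add: h_def)
      qed
      moreover have "length p = l" "length q = l" using pq by (auto simp: Ls_def)
      ultimately show "p = q" by (simp add: nth_equalityI)
    qed
    show "h ` Ls N l = {..<l} \<rightarrow>\<^sub>E {..<N}"
    proof
      show "h ` Ls N l \<subseteq> {..<l} \<rightarrow>\<^sub>E {..<N}"
      proof
        fix P assume "P \<in> h ` Ls N l"
        then obtain p where p: "p \<in> Ls N l" "P = h p" by blast
        have "p ! t < N" if "t < l" for t
        proof -
          have "p ! t \<in> set p" using p(1) that by (simp add: Ls_def)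
          then show ?thesis using p(1) by (auto simp: Ls_def)
        qed
        then show "P \<in> {..<l} \<rightarrow>\<^sub>E {..<N}" unfolding p(2) by (intro PiE_I) (simp_all add: h_def)
      qed
    next
      show "{..<l} \<rightarrow>\<^sub>E {..<N} \<subseteq> h ` Ls N l"
      proof
        fix P assume P: "P \<in> {..<l} \<rightarrow>\<^sub>E {..<N}"
        have "P t < N" if "t < l" for t using PiE_mem[OF P, of t] that by simp
        hence "map P [0..<l] \<in> Ls N l" by (auto simp: Ls_def)
        moreover have "h (map P [0..<l]) = P"
        proof
          fix t show "h (map P [0..<l]) t = P t"
          proof (cases "t < l")
            case True then show ?thesis by (simp add: h_def)
          next
            case False
            then have "P t = undefined" using PiE_arb[OF P, of t] by simp
            then show ?thesis using False by (simp add: h_def)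
          qed
        qed
        ultimately show "P \<in> h ` Ls N l" by (metis image_eqI)
      qed
    qed
  qed
  have "beta N w i l = (\<Sum>p\<in>Ls N l. \<Prod>k<l. w (if k = 0 then i else h p (k - 1), h p k))"
    unfolding beta_def by (rule sum.reindex_bij_betw[OF bij, symmetric])
  also have "\<dots> = (\<Sum>p\<in>Ls N l. \<Prod>t<l. w (ed i p t))"
  proof (intro sum.cong prod.cong refl)
    fix p t assume "t \<in> {..<l}"
    then show "w (if t = 0 then i else h p (t - 1), h p t) = w (ed i p t)"
      by (cases t) (auto simp: h_def ed_def)
  qed
  finally show ?thesis .
qed

lemma prod_ed:
  assumes "finite S" "\<And>t. t < length p \<Longrightarrow> ed i p t \<in> S"
  shows "(\<Prod>t<length p. g (ed i p t)) = (\<Prod>e\<in>S. g e ^ card {t. t < length p \<and> ed i p t = e})"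
proof -
  have "(\<Prod>e\<in>S. \<Prod>x\<in>{x \<in> {..<length p}. ed i p x = e}. g (ed i p x)) = (\<Prod>t<length p. g (ed i p t))"
    using assms by (intro prod.group) auto
  moreover have "(\<Prod>x\<in>{x \<in> {..<length p}. ed i p x = e}. g (ed i p x)) = g e ^ card {t. t < length p \<and> ed i p t = e}" for e
  proof -
    have "(\<Prod>x\<in>{x \<in> {..<length p}. ed i p x = e}. g (ed i p x)) = (\<Prod>x\<in>{x \<in> {..<length p}. ed i p x = e}. g e)"
      by (intro prod.cong) auto
    moreover have "{x \<in> {..<length p}. ed i p x = e} = {t. t < length p \<and> ed i p t = e}" by auto
    ultimately show ?thesis by simp
  qed
  ultimately show ?thesis by simp
qed

lemma prod_ed2:
  assumes "i < N" "set p \<subseteq> {..<N}" "set q \<subseteq> {..<N}"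
  shows "(\<Prod>t<length p. g (ed i p t)) * (\<Prod>t<length q. g (ed i q t)) = (\<Prod>e\<in>{..<N}\<times>{..<N}. g e ^ cnt i p q e)"
  using prod_ed[of "{..<N}\<times>{..<N}" p i g] prod_ed[of "{..<N}\<times>{..<N}" q i g] ed_in[OF assms(1)] assms(2,3)
  by (simp add: cnt_def power_add prod.distrib)

lemma (in prob_space) term_integral:
  fixes W :: "'a \<Rightarrow> nat \<times> nat \<Rightarrow> real"
  assumes indep: "indep_vars (\<lambda>_. borel) (\<lambda>ij \<omega>. W \<omega> ij) ({..<N} \<times> {..<N})"
    and gauss: "\<And>i j. i < N \<Longrightarrow> j < N \<Longrightarrow> distributed M lborel (\<lambda>\<omega>. W \<omega> (i, j)) (normal_density 0 \<sigma>)"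
    and sig: "0 < \<sigma>"
    and m: "i < N" "set p \<subseteq> {..<N}" "set q \<subseteq> {..<N}"
  shows "integrable M (\<lambda>\<omega>. (\<Prod>t<length p. W \<omega> (ed i p t)) * (\<Prod>t<length q. W \<omega> (ed i q t)))"
    and "(\<integral>\<omega>. (\<Prod>t<length p. W \<omega> (ed i p t)) * (\<Prod>t<length q. W \<omega> (ed i q t)) \<partial>M)
          = \<sigma> ^ (length p + length q) * wt N i p q"
proof -
  let ?S = "{..<N} \<times> {..<N}"
  let ?c = "cnt i p q"
  have eq: "(\<lambda>\<omega>. (\<Prod>t<length p. W \<omega> (ed i p t)) * (\<Prod>t<length q. W \<omega> (ed i q t)))
      = (\<lambda>\<omega>. \<Prod>e\<in>?S. W \<omega> e ^ ?c e)"
    using prod_ed2[OF m] by auto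
  have ind2: "indep_vars (\<lambda>_. borel) (\<lambda>e \<omega>. W \<omega> e ^ ?c e) ?S"
    using indep_vars_compose2[OF indep, of "\<lambda>e x. x ^ ?c e" "\<lambda>_. borel"] by simp
  have int1: "integrable M (\<lambda>\<omega>. W \<omega> e ^ ?c e)" if eS: "e \<in> ?S" for e
  proof -
    obtain a b where e: "e = (a,b)" "a < N" "b < N" using eS by auto
    have "integrable lborel (\<lambda>x. normal_density 0 \<sigma> x * x ^ ?c e)"
      using integrable_normal_moment[OF sig, of 0 "?c e"] by simp
    then show ?thesis using distributed_integrable[OF gauss[OF e(2,3)], of "\<lambda>x. x ^ ?c e"] e by simp
  qed
  have int_val: "(\<integral>\<omega>. W \<omega> e ^ ?c e \<partial>M) = \<sigma> ^ ?c e * mm (?c e)" if eS: "e \<in> ?S" for e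
  proof -
    obtain a b where e: "e = (a,b)" "a < N" "b < N" using eS by auto
    have "(\<integral>x. normal_density 0 \<sigma> x * x ^ ?c e \<partial>lborel) = (\<integral>\<omega>. W \<omega> e ^ ?c e \<partial>M)"
      using distributed_integral[OF gauss[OF e(2,3)], of "\<lambda>x. x ^ ?c e"] e by simp
    then show ?thesis using normal_mm[OF sig] by simp
  qed
  show "integrable M (\<lambda>\<omega>. (\<Prod>t<length p. W \<omega> (ed i p t)) * (\<Prod>t<length q. W \<omega> (ed i q t)))"
    unfolding eq by (rule indep_vars_integrable[OF _ ind2 int1]) auto
  have "(\<integral>\<omega>. (\<Prod>e\<in>?S. W \<omega> e ^ ?c e) \<partial>M) = (\<Prod>e\<in>?S. \<integral>\<omega>. W \<omega> e ^ ?c e \<partial>M)"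
    by (rule indep_vars_lebesgue_integral[OF _ ind2 int1]) auto
  also have "\<dots> = (\<Prod>e\<in>?S. \<sigma> ^ ?c e * mm (?c e))" by (intro prod.cong refl int_val)
  also have "\<dots> = \<sigma> ^ (\<Sum>e\<in>?S. ?c e) * wt N i p q"
    unfolding wt_def by (simp add: prod.distrib power_sum)
  also have "(\<Sum>e\<in>?S. ?c e) = length p + length q" by (rule sum_cnt[OF m])
  finally show "(\<integral>\<omega>. (\<Prod>t<length p. W \<omega> (ed i p t)) * (\<Prod>t<length q. W \<omega> (ed i q t)) \<partial>M)
          = \<sigma> ^ (length p + length q) * wt N i p q" unfolding eq .
qed


lemma (in prob_space) gen_eq:
  fixes W :: "'a \<Rightarrow> nat \<times> nat \<Rightarrow> real"
  assumes indep: "indep_vars (\<lambda>_. borel) (\<lambda>ij \<omega>. W \<omega> ij) ({..<N} \<times> {..<N})"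
    and gauss: "\<And>i j. i < N \<Longrightarrow> j < N \<Longrightarrow> distributed M lborel (\<lambda>\<omega>. W \<omega> (i, j)) (normal_density 0 \<sigma>)"
    and sig: "0 < \<sigma>"
  shows "gen_moment_matrix M N W l1 l2 = \<sigma> ^ (l1 + l2) * (\<Sum>(i,p,q)\<in>Om N l1 l2. wt N i p q)"
proof -
  define T where "T x \<omega> = (case x of (i,p,q) \<Rightarrow> (\<Prod>t<l1. W \<omega> (ed i p t)) * (\<Prod>t<l2. W \<omega> (ed i q t)))" for x \<omega>
  have pw: "(\<Sum>i<N. beta N (W \<omega>) i l1 * beta N (W \<omega>) i l2) = (\<Sum>x\<in>Om N l1 l2. T x \<omega>)" for \<omega>
  proof -
    have "(\<Sum>i<N. beta N (W \<omega>) i l1 * beta N (W \<omega>) i l2)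
       = (\<Sum>i<N. \<Sum>p\<in>Ls N l1. \<Sum>q\<in>Ls N l2. (\<Prod>t<l1. W \<omega> (ed i p t)) * (\<Prod>t<l2. W \<omega> (ed i q t)))"
      unfolding beta_list sum_product by simp
    also have "\<dots> = (\<Sum>i<N. \<Sum>(p,q)\<in>Ls N l1 \<times> Ls N l2. (\<Prod>t<l1. W \<omega> (ed i p t)) * (\<Prod>t<l2. W \<omega> (ed i q t)))"
      by (intro sum.cong refl sum.cartesian_product)
    also have "\<dots> = (\<Sum>(i,pq)\<in>{..<N} \<times> (Ls N l1 \<times> Ls N l2). case pq of (p,q) \<Rightarrow> (\<Prod>t<l1. W \<omega> (ed i p t)) * (\<Prod>t<l2. W \<omega> (ed i q t)))"
      by (rule sum.cartesian_product)
    also have "\<dots> = (\<Sum>x\<in>Om N l1 l2. T x \<omega>)"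
      unfolding Om_def T_def by (rule sum.cong) auto
    finally show ?thesis .
  qed
  have Tint: "integrable M (T x) \<and> (\<integral>\<omega>. T x \<omega> \<partial>M) = \<sigma> ^ (l1 + l2) * (case x of (i,p,q) \<Rightarrow> wt N i p q)"
    if x: "x \<in> Om N l1 l2" for x
  proof -
    obtain i p q where xx: "x = (i,p,q)" by (cases x) auto
    have m: "i < N" "set p \<subseteq> {..<N}" "set q \<subseteq> {..<N}" "length p = l1" "length q = l2"
      using Om_mem[of i p q N l1 l2] x xx by auto
    have "T x = (\<lambda>\<omega>. (\<Prod>t<length p. W \<omega> (ed i p t)) * (\<Prod>t<length q. W \<omega> (ed i q t)))"
      using m xx by (simp add: T_def fun_eq_iff)
    then show ?thesis using term_integral[OF indep gauss sig m(1-3)] m xx by simp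
  qed
  have "gen_moment_matrix M N W l1 l2 = (\<integral>\<omega>. (\<Sum>x\<in>Om N l1 l2. T x \<omega>) \<partial>M)"
    unfolding gen_moment_matrix_def pw ..
  also have "\<dots> = (\<Sum>x\<in>Om N l1 l2. \<integral>\<omega>. T x \<omega> \<partial>M)"
    by (rule Bochner_Integration.integral_sum) (use Tint in auto)
  also have "\<dots> = (\<Sum>x\<in>Om N l1 l2. \<sigma> ^ (l1 + l2) * (case x of (i,p,q) \<Rightarrow> wt N i p q))"
    by (intro sum.cong refl) (use Tint in auto)
  also have "\<dots> = \<sigma> ^ (l1 + l2) * (\<Sum>(i,p,q)\<in>Om N l1 l2. wt N i p q)"
    by (simp add: sum_distrib_left)
  finally show ?thesis .
qed

theorem mainTheorem11:
  fixes M :: "'a measure" and W :: "'a \<Rightarrow> nat \<times> nat \<Rightarrow> real"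
    and N T l1 l2 :: nat and \<rho> \<alpha> :: real
  assumes "prob_space M"
    and "N \<ge> 1" and "T \<ge> 1" and "\<rho> > 0"
    and "l1 \<le> T" and "l2 \<le> T"
    and indep: "prob_space.indep_vars M (\<lambda>_. borel) (\<lambda>ij \<omega>. W \<omega> ij) ({..<N} \<times> {..<N})"
    and gauss: "\<And>i j. i < N \<Longrightarrow> j < N \<Longrightarrow>
        distributed M lborel (\<lambda>\<omega>. W \<omega> (i, j)) (normal_density 0 (\<rho> / real N powr \<alpha>))"
  shows "(odd (l1 + l2) \<longrightarrow> gen_moment_matrix M N W l1 l2 = 0)
    \<and> (even (l1 + l2) \<and> (l1 + l2) div 2 + 1 \<le> N \<longrightarrow>
        (let s = l1 + l2; \<delta> = (if l1 = l2 then 1 else 0 :: real) in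
          \<rho> ^ s * (\<Prod>k\<in>{0..s div 2}. real N - real k) / real N powr (\<alpha> * real s) * \<delta>
            \<le> gen_moment_matrix M N W l1 l2
          \<and> gen_moment_matrix M N W l1 l2
            \<le> \<rho> ^ s * real N powr (real s * (1/2 - \<alpha>) + 1) * \<delta>
              + \<rho> ^ s * gauss_moment s * (real s / 2) ^ s * real N powr (real s * (1/2 - \<alpha>))))"
proof -
  interpret prob_space M by (rule assms(1))
  define \<sigma> where "\<sigma> = \<rho> / real N powr \<alpha>"
  have Npos: "0 < real N" using assms(2) by simp
  have sig: "0 < \<sigma>" unfolding \<sigma>_def using assms(4) Npos by simp
  define Sw where "Sw = (\<Sum>(i,p,q)\<in>Om N l1 l2. wt N i p q)"
  have G: "gen_moment_matrix M N W l1 l2 = \<sigma> ^ (l1 + l2) * Sw"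
    unfolding Sw_def by (rule gen_eq[OF indep gauss[folded \<sigma>_def] sig])
  have Swn: "0 \<le> Sw" unfolding Sw_def by (rule sum_wt_nonneg)
  show ?thesis
  proof (intro conjI impI)
    assume "odd (l1 + l2)"
    then show "gen_moment_matrix M N W l1 l2 = 0" using G sum_wt_odd unfolding Sw_def by simp
  next
    assume ev: "even (l1 + l2) \<and> (l1 + l2) div 2 + 1 \<le> N"
    define s where "s = l1 + l2"
    define k where "k = s div 2"
    define \<delta> where "\<delta> = (if l1 = l2 then 1 else 0 :: real)"
    define A where "A = real N powr (\<alpha> * real s)"
    have s2: "s = 2 * k" using ev unfolding s_def k_def by simp
    have kN: "Suc k \<le> N" using ev unfolding k_def s_def by simp
    have Apos: "0 < A" unfolding A_def using Npos by simp
    have F1: "\<sigma> ^ s = \<rho> ^ s / A"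
      unfolding \<sigma>_def A_def using Npos by (simp add: power_divide powr_power mult.commute)
    have F2: "real N powr (real s * (1/2 - \<alpha>) + 1) = real N ^ Suc k / A"
    proof -
      have e: "real s * (1/2 - \<alpha>) + 1 = real (Suc k) - \<alpha> * real s" using s2 by (simp add: algebra_simps)
      show ?thesis unfolding e powr_diff powr_realpow[OF Npos] A_def ..
    qed
    have F3: "real N powr (real s * (1/2 - \<alpha>)) = real N ^ k / A"
    proof -
      have e: "real s * (1/2 - \<alpha>) = real k - \<alpha> * real s" using s2 by (simp add: algebra_simps)
      show ?thesis unfolding e powr_diff powr_realpow[OF Npos] A_def ..
    qed
    have F4: "(real s / 2) ^ s = real k ^ s" using s2 by simp
    have F5: "gauss_moment s = mm s" unfolding gauss_moment_def by (rule gauss_mm)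
    have lower: "\<rho> ^ s * (\<Prod>k\<in>{0..s div 2}. real N - real k) / A * \<delta> \<le> gen_moment_matrix M N W l1 l2"
    proof (cases "l1 = l2")
      case True
      have kl: "k = l1" using True s2 unfolding s_def by simp
      have "(\<Prod>k\<in>{0..s div 2}. real N - real k) \<le> Sw"
        unfolding Sw_def using sum_wt_lower[of l1 N] kN kl True k_def by simp
      hence "\<rho> ^ s / A * (\<Prod>k\<in>{0..s div 2}. real N - real k) \<le> \<rho> ^ s / A * Sw"
        using assms(4) Apos by (intro mult_left_mono) auto
      then show ?thesis using G F1 True unfolding \<delta>_def s_def by (simp add: mult.commute)
    next
      case False
      then show ?thesis using G Swn sig unfolding \<delta>_def s_def by simp
    qed
    have GGb: "real (card (GG N l1 l2)) \<le> real N ^ Suc k * \<delta>"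
    proof (cases "l1 = l2")
      case True
      have kl: "k = l1" using True s2 unfolding s_def by simp
      show ?thesis using card_GG_le[of l1 N] kN kl True unfolding \<delta>_def by simp
    next
      case False then show ?thesis using GG_empty[OF False] unfolding \<delta>_def by simp
    qed
    have Bb: "mm s * real (card (Bad N l1 l2)) \<le> mm s * (real k ^ s * real N ^ k)"
      using card_Bad[OF assms(2), of l1 l2] mm_nonneg[of s] unfolding k_def s_def
      by (intro mult_left_mono) auto
    have "Sw \<le> real N ^ Suc k * \<delta> + mm s * (real k ^ s * real N ^ k)"
      using sum_wt_upper[of N l1 l2] GGb Bb unfolding Sw_def s_def by linarith
    hence "\<rho> ^ s / A * Sw \<le> \<rho> ^ s / A * (real N ^ Suc k * \<delta> + mm s * (real k ^ s * real N ^ k))"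
      using assms(4) Apos by (intro mult_left_mono) auto
    also have "\<dots> = \<rho> ^ s * (real N ^ Suc k / A) * \<delta> + \<rho> ^ s * mm s * real k ^ s * (real N ^ k / A)"
      by (simp add: field_simps add_divide_distrib)
    finally have upper: "gen_moment_matrix M N W l1 l2 \<le> \<rho> ^ s * real N powr (real s * (1/2 - \<alpha>) + 1) * \<delta>
              + \<rho> ^ s * gauss_moment s * (real s / 2) ^ s * real N powr (real s * (1/2 - \<alpha>))"
      unfolding F2 F3 F4 F5 using G F1 unfolding s_def by simp
    show "let s = l1 + l2; \<delta> = (if l1 = l2 then 1 else 0 :: real) in
          \<rho> ^ s * (\<Prod>k\<in>{0..s div 2}. real N - real k) / real N powr (\<alpha> * real s) * \<delta>
            \<le> gen_moment_matrix M N W l1 l2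
          \<and> gen_moment_matrix M N W l1 l2
            \<le> \<rho> ^ s * real N powr (real s * (1/2 - \<alpha>) + 1) * \<delta>
              + \<rho> ^ s * gauss_moment s * (real s / 2) ^ s * real N powr (real s * (1/2 - \<alpha>))"
      using lower upper unfolding Let_def s_def \<delta>_def A_def by simp
  qed
qed


end
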